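(* There exists a distribution $F$ on $\mathbb{R}$ with $q_1:=F([0,\infty))\in(0,1)$ such that: $F_2$ is heavy-tailed; $F_1$ is not locally almost decreasing; $F_1\in\mathcal{S}_{loc}$, i.e. for every $d>0$, $F_1\in\mathcal{L}_{\Delta_d}$ and $F_1^{*2}(x+\Delta_d)\sim 2F_1(x+\Delta_d)$; but the relation $F^{*2}(x+\Delta_d)\sim 2F(x+\Delta_d)$ does not hold (so $F$ does not belong to $\mathcal{S}_{loc}$ in the sense of this relation).
   Context: For a distribution $G$ and $d>0$ write $G(x+\Delta_d):=G((x,x+d])$, and $G^{*2}$ for the convolution of $G$ with itself; $a(x)\sim b(x)$ means $a(x)/b(x)\to1$ as $x\to\infty$. For $d>0$, $G\in\mathcal{L}_{\Delta_d}$ if $G(x+\Delta_d)>0$ for all sufficiently large $x$ and for every $t>0$, $G(x+s+\Delta_d)\sim G(x+\Delta_d)$ uniformly in $|s|\le t$; $\mathcal{S}_{loc}$ is the class of $G$ such that for every $d>0$, $G\in\mathcal{L}_{\Delta_d}$ and $G^{*2}(x+\Delta_d)\sim2G(x+\Delta_d)$. For a distribution $F$ on $\mathbb{R}$ with $q_1=F([0,\infty))\in(0,1)$ and $q_2=F((-\infty,0))=1-q_1$, define $F_1(dy)=q_1^{-1}F(dy)\mathbf 1_{[0,\infty)}(y)$ and $F_2(dy)=q_2^{-1}F(dy)\mathbf 1_{(-\infty,0)}(y)$, so $F=q_1F_1+q_2F_2$. Let $-X_2$ be a random variable with distribution $F_2$; $F_2$ is heavy-tailed if $E e^{\varepsilon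 X_2}=\infty$ for every $\varepsilon>0$. $F_1$ is locally almost decreasing if there is $x_0\ge0$ such that for every $d>0$, $F_1(x+\Delta_d)>0$ for $x\ge x_0$ and $\sup_{x_0\le x\le y<\infty}F_1(y+\Delta_d)/F_1(x+\Delta_d)<\infty$. *)

theory Defs
  imports "HOL-Probability.Probability" "HOL-Library.Landau_Symbols"
begin

definition is_real_distr :: "real measure \<Rightarrow> bool" where
  "is_real_distr G \<longleftrightarrow> prob_space G \<and> sets G = sets borel"

text \<open>G(x + Delta_d) = G((x, x+d])\<close>
definition loc :: "real measure \<Rightarrow> real \<Rightarrow> real \<Rightarrow> real" where
  "loc G d x = measure G {x<..x+d}"

definition in_L_Delta :: "real \<Rightarrow> real measure \<Rightarrow> bool" where
  "in_L_Delta d G \<longleftrightarrow>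
     (\<forall>\<^sub>F x in at_top. loc G d x > 0) \<and>
     (\<forall>t>0. \<forall>\<epsilon>>0. \<forall>\<^sub>F x in at_top. \<forall>s. \<bar>s\<bar> \<le> t \<longrightarrow>
          \<bar>loc G d (x + s) / loc G d x - 1\<bar> \<le> \<epsilon>)"

definition S_loc :: "real measure \<Rightarrow> bool" where
  "S_loc G \<longleftrightarrow> (\<forall>d>0. in_L_Delta d G \<and>
      (loc (G \<star> G) d) \<sim>[at_top] (\<lambda>x. 2 * loc G d x))"

definition q1 :: "real measure \<Rightarrow> real" where
  "q1 F = measure F {0..}"

definition F1 :: "real measure \<Rightarrow> real measure" where
  "F1 F = density F (\<lambda>y. ennreal (indicator {0..} y / q1 F))"

definition F2 :: "real measure \<Rightarrow> real measure" where
  "F2 F = density F (\<lambda>y. ennreal (indicator {..<0} y / (1 - q1 F)))"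

definition heavy_tailed_F2 :: "real measure \<Rightarrow> bool" where
  "heavy_tailed_F2 F \<longleftrightarrow>
     (\<forall>\<epsilon>>0. (\<integral>\<^sup>+ y. ennreal (exp (\<epsilon> * (- y))) \<partial>(F2 F)) = \<infinity>)"

definition locally_almost_decreasing :: "real measure \<Rightarrow> bool" where
  "locally_almost_decreasing G \<longleftrightarrow>
     (\<exists>x0\<ge>0. \<forall>d>0. (\<forall>x\<ge>x0. loc G d x > 0) \<and>
        bdd_above {loc G d y / loc G d x | x y. x0 \<le> x \<and> x \<le> y})"

end

theory Submission
  imports Defs "HOL-Real_Asymp.Real_Asymp"
begin

lemma inner_ind:
  fixes G :: "real measure"
  assumes "prob_space G" "sets G = sets borel"
  shows "(\<integral>\<^sup>+x. indicator {z<..z+d} (x + y) \<partial>G) = ennreal (measure G {z-y<..z-y+d})"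
proof -
  interpret prob_space G by fact
  have "(\<integral>\<^sup>+x. indicator {z<..z+d} (x + y) \<partial>G) = (\<integral>\<^sup>+x. indicator {z-y<..z-y+d} x \<partial>G)"
    by (intro nn_integral_cong) (auto simp: indicator_def)
  also have "\<dots> = emeasure G {z-y<..z-y+d}"
    using assms(2) by (intro nn_integral_indicator) auto
  also have "\<dots> = ennreal (measure G {z-y<..z-y+d})" by (simp add: emeasure_eq_measure)
  finally show ?thesis .
qed

lemma inner_ind2:
  fixes G :: "real measure"
  assumes "prob_space G" "sets G = sets borel"
  shows "(\<integral>\<^sup>+y. indicator {z<..z+d} (x + y) \<partial>G) = ennreal (measure G {z-x<..z-x+d})"
  using inner_ind[OF assms, of z d x] by (simp add: add.commute)

lemma conv_upper:
  fixes G :: "real measure" and z d c :: real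
  assumes G: "prob_space G" and sG[measurable_cong]: "sets G = sets borel" and c: "c = z/2 + d"
  shows "emeasure (G \<star> G) {z<..z+d} \<le>
     2 * (\<integral>\<^sup>+x. indicator {..c} x * ennreal (measure G {z-x<..z-x+d}) \<partial>G)"
proof -
  interpret prob_space G by fact
  interpret pair_sigma_finite G G ..
  let ?A = "{z<..z+d}"
  let ?H = "\<integral>\<^sup>+x. indicator {..c} x * ennreal (measure G {z-x<..z-x+d}) \<partial>G"
  have fm: "finite_measure G" by (rule finite_measure_axioms)
  have "emeasure (G \<star> G) ?A = (\<integral>\<^sup>+x. \<integral>\<^sup>+y. indicator ?A (x + y) \<partial>G \<partial>G)"
    using fm sG by (intro convolution_emeasure') auto
  also have "\<dots> \<le> (\<integral>\<^sup>+x. \<integral>\<^sup>+y. indicator ?A (x + y) * indicator {..c} y + indicator {..c} x * indicator ?A (x + y) \<partial>G \<partial>G)"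
    by (intro nn_integral_mono) (auto simp: indicator_def c)
  also have "\<dots> = (\<integral>\<^sup>+x. (\<integral>\<^sup>+y. indicator ?A (x + y) * indicator {..c} y \<partial>G) + (\<integral>\<^sup>+y. indicator {..c} x * indicator ?A (x + y) \<partial>G) \<partial>G)"
    by (intro nn_integral_cong nn_integral_add) auto
  also have "\<dots> = (\<integral>\<^sup>+x. \<integral>\<^sup>+y. indicator ?A (x + y) * indicator {..c} y \<partial>G \<partial>G) + (\<integral>\<^sup>+x. \<integral>\<^sup>+y. indicator {..c} x * indicator ?A (x + y) \<partial>G \<partial>G)"
    by (intro nn_integral_add) auto
  also have "(\<integral>\<^sup>+x. \<integral>\<^sup>+y. indicator {..c} x * indicator ?A (x + y) \<partial>G \<partial>G) = ?H"
    by (intro nn_integral_cong) (use inner_ind2[OF G sG, of z d] in \<open>simp add: nn_integral_cmult\<close>)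
  also have "(\<integral>\<^sup>+x. \<integral>\<^sup>+y. indicator ?A (x + y) * indicator {..c} y \<partial>G \<partial>G)
      = (\<integral>\<^sup>+y. \<integral>\<^sup>+x. indicator ?A (x + y) * indicator {..c} y \<partial>G \<partial>G)"
    by (rule Fubini') simp
  also have "\<dots> = ?H"
  proof (intro nn_integral_cong)
    fix y
    have "(\<integral>\<^sup>+x. indicator ?A (x + y) * indicator {..c} y \<partial>G) = (\<integral>\<^sup>+x. indicator ?A (x + y) \<partial>G) * indicator {..c} y"
      by (rule nn_integral_multc) simp
    then show "(\<integral>\<^sup>+x. indicator ?A (x + y) * indicator {..c} y \<partial>G) = indicator {..c} y * ennreal (measure G {z-y<..z-y+d})"
      by (simp add: inner_ind[OF G sG] mult.commute)
  qed
  finally show ?thesis by (simp add: mult_2)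
qed

lemma conv_lower:
  fixes G :: "real measure" and z d M :: real
  assumes G: "prob_space G" and sG[measurable_cong]: "sets G = sets borel" and zM: "2 * M < z"
  shows "2 * (\<integral>\<^sup>+x. indicator {..M} x * ennreal (measure G {z-x<..z-x+d}) \<partial>G)
     \<le> emeasure (G \<star> G) {z<..z+d}"
proof -
  interpret prob_space G by fact
  interpret pair_sigma_finite G G ..
  let ?A = "{z<..z+d}"
  let ?c = M
  let ?H = "\<integral>\<^sup>+x. indicator {..M} x * ennreal (measure G {z-x<..z-x+d}) \<partial>G"
  have fm: "finite_measure G" by (rule finite_measure_axioms)
  have "(\<integral>\<^sup>+x. \<integral>\<^sup>+y. indicator ?A (x + y) * indicator {..?c} y \<partial>G \<partial>G)
      = (\<integral>\<^sup>+y. \<integral>\<^sup>+x. indicator ?A (x + y) * indicator {..?c} y \<partial>G \<partial>G)"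
    by (rule Fubini') simp
  also have "\<dots> = ?H"
  proof (intro nn_integral_cong)
    fix y
    have "(\<integral>\<^sup>+x. indicator ?A (x + y) * indicator {..?c} y \<partial>G) = (\<integral>\<^sup>+x. indicator ?A (x + y) \<partial>G) * indicator {..?c} y"
      by (rule nn_integral_multc) simp
    then show "(\<integral>\<^sup>+x. indicator ?A (x + y) * indicator {..?c} y \<partial>G) = indicator {..?c} y * ennreal (measure G {z-y<..z-y+d})"
      by (simp add: inner_ind[OF G sG] mult.commute)
  qed
  finally have h1: "(\<integral>\<^sup>+x. \<integral>\<^sup>+y. indicator ?A (x + y) * indicator {..?c} y \<partial>G \<partial>G) = ?H" .
  have h2: "(\<integral>\<^sup>+x. \<integral>\<^sup>+y. indicator {..?c} x * indicator ?A (x + y) \<partial>G \<partial>G) = ?H"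
    by (intro nn_integral_cong) (use inner_ind2[OF G sG, of z d] in \<open>simp add: nn_integral_cmult\<close>)
  have "2 * ?H = (\<integral>\<^sup>+x. \<integral>\<^sup>+y. indicator ?A (x + y) * indicator {..?c} y \<partial>G \<partial>G) + (\<integral>\<^sup>+x. \<integral>\<^sup>+y. indicator {..?c} x * indicator ?A (x + y) \<partial>G \<partial>G)"
    by (simp add: h1 h2 mult_2)
  also have "\<dots> = (\<integral>\<^sup>+x. (\<integral>\<^sup>+y. indicator ?A (x + y) * indicator {..?c} y \<partial>G) + (\<integral>\<^sup>+y. indicator {..?c} x * indicator ?A (x + y) \<partial>G) \<partial>G)"
    by (intro nn_integral_add[symmetric]) auto
  also have "\<dots> = (\<integral>\<^sup>+x. \<integral>\<^sup>+y. indicator ?A (x + y) * indicator {..?c} y + indicator {..?c} x * indicator ?A (x + y) \<partial>G \<partial>G)"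
    by (intro nn_integral_cong nn_integral_add[symmetric]) auto
  also have "\<dots> \<le> (\<integral>\<^sup>+x. \<integral>\<^sup>+y. indicator ?A (x + y) \<partial>G \<partial>G)"
    using zM by (intro nn_integral_mono) (auto simp: indicator_def)
  also have "\<dots> = emeasure (G \<star> G) ?A"
    using fm sG by (intro convolution_emeasure'[symmetric]) auto
  finally show ?thesis .
qed

lemma H_upper:
  fixes G :: "real measure" and z d M c a b :: real
  assumes G: "prob_space G" and sG[measurable_cong]: "sets G = sets borel"
    and nonneg: "AE x in G. 0 \<le> x" and a: "0 \<le> a" and b: "0 \<le> b"
    and h1: "\<And>x. 0 \<le> x \<Longrightarrow> x \<le> M \<Longrightarrow> measure G {z-x<..z-x+d} \<le> a"
    and h2: "\<And>x. M < x \<Longrightarrow> x \<le> c \<Longrightarrow> measure G {z-x<..z-x+d} \<le> b"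
  shows "(\<integral>\<^sup>+x. indicator {..c} x * ennreal (measure G {z-x<..z-x+d}) \<partial>G)
     \<le> ennreal (a + b * measure G {M<..})"
proof -
  interpret prob_space G by fact
  have "(\<integral>\<^sup>+x. indicator {..c} x * ennreal (measure G {z-x<..z-x+d}) \<partial>G)
     \<le> (\<integral>\<^sup>+x. ennreal a * indicator {..M} x + ennreal b * indicator {M<..} x \<partial>G)"
  proof (rule nn_integral_mono_AE)
    show "AE x in G. indicator {..c} x * ennreal (measure G {z-x<..z-x+d})
        \<le> ennreal a * indicator {..M} x + ennreal b * indicator {M<..} x"
      using nonneg
    proof eventually_elim
      case (elim x)
      show ?case
      proof (cases "x \<le> M")
        case True then show ?thesis using h1[OF elim True] by (auto simp: indicator_def intro: ennreal_leI)
      next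
        case False then show ?thesis using h2[of x] by (auto simp: indicator_def intro: ennreal_leI)
      qed
    qed
  qed
  also have "\<dots> = ennreal a * emeasure G {..M} + ennreal b * emeasure G {M<..}"
    using sG by (subst nn_integral_add) (auto simp: nn_integral_cmult_indicator)
  also have "\<dots> = ennreal (a * prob {..M} + b * prob {M<..})"
    using a b by (simp add: emeasure_eq_measure ennreal_mult)
  also have "\<dots> \<le> ennreal (a + b * prob {M<..})"
    using a by (intro ennreal_leI add_mono mult_left_le) auto
  finally show ?thesis .
qed

lemma H_lower:
  fixes G :: "real measure" and z d M a :: real
  assumes G: "prob_space G" and sG[measurable_cong]: "sets G = sets borel"
    and nonneg: "AE x in G. 0 \<le> x" and a: "0 \<le> a"
    and h1: "\<And>x. 0 \<le> x \<Longrightarrow> x \<le> M \<Longrightarrow> a \<le> measure G {z-x<..z-x+d}"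
  shows "ennreal (a * measure G {..M}) \<le> (\<integral>\<^sup>+x. indicator {..M} x * ennreal (measure G {z-x<..z-x+d}) \<partial>G)"
proof -
  interpret prob_space G by fact
  have "ennreal (a * measure G {..M}) = (\<integral>\<^sup>+x. ennreal a * indicator {..M} x \<partial>G)"
    using sG a by (simp add: nn_integral_cmult_indicator emeasure_eq_measure ennreal_mult)
  also have "\<dots> \<le> (\<integral>\<^sup>+x. indicator {..M} x * ennreal (measure G {z-x<..z-x+d}) \<partial>G)"
  proof (rule nn_integral_mono_AE)
    show "AE x in G. ennreal a * indicator {..M} x \<le> indicator {..M} x * ennreal (measure G {z-x<..z-x+d})"
      using nonneg
    proof eventually_elim
      case (elim x)
      show ?case
      proof (cases "x \<le> M")
        case True then show ?thesis using h1[OF elim True] by (auto simp: indicator_def intro: ennreal_leI)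
      next
        case False then show ?thesis by (auto simp: indicator_def)
      qed
    qed
  qed
  finally show ?thesis .
qed

lemma ennreal_2le:
  assumes "ennreal r \<le> 2 * ennreal X" "0 \<le> X" shows "r \<le> 2 * X"
proof -
  have "2 * ennreal X = ennreal (2 * X)" using assms(2) by (simp add: ennreal_mult)
  with assms show ?thesis by (auto simp: ennreal_le_iff2)
qed

lemma ennreal_2ge:
  assumes "2 * ennreal X \<le> ennreal r" "0 \<le> X" "0 \<le> r" shows "2 * X \<le> r"
proof -
  have "2 * ennreal X = ennreal (2 * X)" using assms(2) by (simp add: ennreal_mult)
  with assms show ?thesis by simp
qed

lemma conv_asymp:
  fixes G :: "real measure" and d :: real
  assumes G: "prob_space G" and sG[measurable_cong]: "sets G = sets borel"
    and nonneg: "AE x in G. 0 \<le> x" and d: "d > 0"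
    and L: "in_L_Delta d G"
    and dom: "\<exists>C>0. \<forall>\<^sub>F z in at_top. \<forall>u. z/2 - d \<le> u \<longrightarrow> u \<le> z \<longrightarrow> loc G d u \<le> C * loc G d z"
  shows "loc (G \<star> G) d \<sim>[at_top] (\<lambda>z. 2 * loc G d z)"
proof (rule asymp_equivI', rule tendstoI)
  interpret prob_space G by fact
  interpret real_distribution G using sG by unfold_locales
  have finc: "finite_measure (G \<star> G)"
    using sG by (intro convolution_finite) (auto simp: finite_measure_axioms)
  obtain C where C: "C > 0" and domC: "\<forall>\<^sub>F z in at_top. \<forall>u. z/2 - d \<le> u \<longrightarrow> u \<le> z \<longrightarrow> loc G d u \<le> C * loc G d z"
    using dom by blast
  fix e :: real assume e: "e > 0"
  define \<epsilon> where "\<epsilon> = min (1/2) (e/3)"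
  define \<tau> where "\<tau> = min (1/2) (min (e/3) (e/(3*C)))"
  have \<epsilon>: "0 < \<epsilon>" "\<epsilon> \<le> 1/2" "\<epsilon> \<le> e/3" using e by (auto simp: \<epsilon>_def)
  have \<tau>: "0 < \<tau>" "\<tau> \<le> 1/2" "\<tau> \<le> e/3" "C * \<tau> \<le> e/3"
    using e C by (auto simp: \<tau>_def min_def field_simps)
  have "\<forall>\<^sub>F M in at_top. cdf G M > 1 - \<tau>"
    using cdf_lim_at_top_prob \<tau>(1) by (intro order_tendstoD) auto
  then obtain M0 where M0: "\<And>M. M \<ge> M0 \<Longrightarrow> cdf G M > 1 - \<tau>"
    by (auto simp: eventually_at_top_linorder)
  define M where "M = max 1 M0"
  have M1: "M \<ge> 1" and cdfM: "prob {..M} > 1 - \<tau>"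
    using M0[of M] by (auto simp: M_def cdf_def)
  have tail: "prob {M<..} < \<tau>"
  proof -
    have "prob {M<..} = prob (space G - {..M})"
      using sG by (intro arg_cong[where f=prob]) (auto simp: sets_eq_imp_space_eq[OF sG])
    also have "\<dots> = 1 - prob {..M}" using sG by (intro prob_compl) auto
    finally show ?thesis using cdfM by simp
  qed
  have ev: "\<forall>\<^sub>F z in at_top. loc G d z > 0 \<and>
      (\<forall>s. \<bar>s\<bar> \<le> M \<longrightarrow> \<bar>loc G d (z + s) / loc G d z - 1\<bar> \<le> \<epsilon>) \<and>
      (\<forall>u. z/2 - d \<le> u \<longrightarrow> u \<le> z \<longrightarrow> loc G d u \<le> C * loc G d z) \<and> z > 2 * M"
    using L M1 \<epsilon>(1) domC unfolding in_L_Delta_def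
    by (intro eventually_conj) (auto intro: eventually_gt_at_top)
  show "\<forall>\<^sub>F z in at_top. dist (loc (G \<star> G) d z / (2 * loc G d z)) 1 < e"
    using ev
  proof eventually_elim
    case (elim z)
    define l where "l = loc G d z"
    have l: "l > 0" using elim by (simp add: l_def)
    have lt: "\<And>s. \<bar>s\<bar> \<le> M \<Longrightarrow> \<bar>loc G d (z + s) / l - 1\<bar> \<le> \<epsilon>"
      using elim by (simp add: l_def)
    have lt_up: "loc G d (z + s) \<le> (1 + \<epsilon>) * l" and lt_lo: "(1 - \<epsilon>) * l \<le> loc G d (z + s)"
      if "\<bar>s\<bar> \<le> M" for s
      using lt[OF that] l by (auto simp: abs_le_iff field_simps)
    have convE: "emeasure (G \<star> G) {z<..z+d} = ennreal (loc (G \<star> G) d z)"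
      by (simp add: loc_def finite_measure.emeasure_eq_measure[OF finc])
    have up: "emeasure (G \<star> G) {z<..z+d} \<le> 2 * ennreal ((1 + \<epsilon>) * l + (C * l) * prob {M<..})"
    proof -
      have "emeasure (G \<star> G) {z<..z+d} \<le> 2 * (\<integral>\<^sup>+x. indicator {..z/2+d} x * ennreal (measure G {z-x<..z-x+d}) \<partial>G)"
        by (rule conv_upper[OF G sG]) simp
      also have "(\<integral>\<^sup>+x. indicator {..z/2+d} x * ennreal (measure G {z-x<..z-x+d}) \<partial>G) \<le> ennreal ((1 + \<epsilon>) * l + (C * l) * prob {M<..})"
      proof (rule H_upper[OF G sG nonneg])
        show "0 \<le> (1 + \<epsilon>) * l" "0 \<le> C * l" using l \<epsilon> C by auto
        fix x assume "0 \<le> x" "x \<le> M"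
        then have "\<bar>-x\<bar> \<le> M" by simp
        from lt_up[OF this] show "measure G {z - x<..z - x + d} \<le> (1 + \<epsilon>) * l"
          by (simp add: loc_def)
      next
        fix x assume "M < x" "x \<le> z/2 + d"
        then show "measure G {z - x<..z - x + d} \<le> C * l"
          using elim M1 by (auto simp: loc_def l_def)
      qed
      finally show ?thesis by (simp add: mult_left_mono)
    qed
    have lo: "2 * ennreal ((1 - \<epsilon>) * l * prob {..M}) \<le> emeasure (G \<star> G) {z<..z+d}"
    proof -
      have "ennreal ((1 - \<epsilon>) * l * prob {..M}) \<le> (\<integral>\<^sup>+x. indicator {..M} x * ennreal (measure G {z-x<..z-x+d}) \<partial>G)"
      proof (rule H_lower[OF G sG nonneg])
        show "0 \<le> (1 - \<epsilon>) * l" using l \<epsilon> by auto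
        fix x assume "0 \<le> x" "x \<le> M"
        then have "\<bar>-x\<bar> \<le> M" by simp
        from lt_lo[OF this] show "(1 - \<epsilon>) * l \<le> measure G {z - x<..z - x + d}"
          by (simp add: loc_def)
      qed
      then have "2 * ennreal ((1 - \<epsilon>) * l * prob {..M}) \<le> 2 * (\<integral>\<^sup>+x. indicator {..M} x * ennreal (measure G {z-x<..z-x+d}) \<partial>G)"
        by (simp add: mult_left_mono)
      also have "\<dots> \<le> emeasure (G \<star> G) {z<..z+d}"
        using elim by (intro conv_lower[OF G sG]) auto
      finally show ?thesis .
    qed
    define r where "r = loc (G \<star> G) d z"
    have up': "r \<le> 2 * ((1 + \<epsilon>) * l + (C * l) * prob {M<..})"
      using up l \<epsilon> C unfolding convE r_def[symmetric]
      by (intro ennreal_2le) auto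
    have lo': "2 * ((1 - \<epsilon>) * l * prob {..M}) \<le> r"
      using lo l \<epsilon> C unfolding convE r_def[symmetric]
      by (intro ennreal_2ge) (auto simp: r_def loc_def)
    have "prob {M<..} \<ge> 0" by simp
    have A: "r / (2 * l) \<le> 1 + \<epsilon> + C * prob {M<..}"
      using up' l by (simp add: field_simps)
    have B: "(1 - \<epsilon>) * prob {..M} \<le> r / (2 * l)"
      using lo' l by (simp add: field_simps)
    have "C * prob {M<..} \<le> C * \<tau>" using tail C by simp
    then have A': "r / (2 * l) < 1 + e" using A \<epsilon> \<tau> e by linarith
    have "(1 - \<epsilon>) * prob {..M} \<ge> (1 - \<epsilon>) * (1 - \<tau>)"
      using cdfM \<epsilon> by (intro mult_left_mono) auto
    moreover have "(1 - \<epsilon>) * (1 - \<tau>) \<ge> 1 - \<epsilon> - \<tau>" using \<epsilon> \<tau> by (simp add: algebra_simps)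
    ultimately have B': "r / (2 * l) > 1 - e" using B \<epsilon> \<tau> e by linarith
    show ?case using A' B' by (simp add: dist_real_def r_def l_def abs_less_iff)
  qed
qed

definition PP :: "real set" where "PP = range (\<lambda>k::nat. 2 ^ k)"

definition gg :: "real \<Rightarrow> real" where
  "gg x = (if 1 \<le> x then exp (- 2 * ln x - 20 * infdist (ln x) PP) else 0)"

lemma gg_nonneg: "0 \<le> gg x" by (simp add: gg_def)

lemma gg_pos: "1 \<le> x \<Longrightarrow> 0 < gg x" by (simp add: gg_def)

lemma gg_meas[measurable]: "gg \<in> borel_measurable borel"
proof -
  have [measurable]: "(\<lambda>x::real. infdist x PP) \<in> borel_measurable borel"
    by (intro borel_measurable_continuous_onI continuous_intros)
  show ?thesis unfolding gg_def by measurable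
qed

lemma lin_aux:
  fixes a b c e A :: real
  assumes "a - b \<le> A" "-(a - b) \<le> A" "c - e \<le> A" "-(c - e) \<le> A"
  shows "- 2 * a - 20 * c \<le> - 2 * b - 20 * e + 22 * A"
    and "(- 2 * b - 20 * e) - 22 * A \<le> - 2 * a - 20 * c"
  using assms by linarith+

lemma gg_ratio:
  assumes "1 \<le> x" "1 \<le> u"
  shows "gg u \<le> gg x * exp (22 * \<bar>ln u - ln x\<bar>)"
    and "gg x * exp (- 22 * \<bar>ln u - ln x\<bar>) \<le> gg u"
proof -
  have t: "\<bar>infdist (ln u) PP - infdist (ln x) PP\<bar> \<le> \<bar>ln u - ln x\<bar>"
    using infdist_triangle_abs[of "ln u" PP "ln x"] by (simp add: dist_real_def)
  have "- 2 * ln u - 20 * infdist (ln u) PP \<le> (- 2 * ln x - 20 * infdist (ln x) PP) + 22 * \<bar>ln u - ln x\<bar>"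
    using t abs_ge_self[of "ln u - ln x"] abs_ge_minus_self[of "ln u - ln x"] unfolding abs_le_iff by (elim conjE) (rule lin_aux(1))
  then show "gg u \<le> gg x * exp (22 * \<bar>ln u - ln x\<bar>)"
    using assms by (simp add: gg_def exp_add[symmetric])
  have "(- 2 * ln x - 20 * infdist (ln x) PP) - 22 * \<bar>ln u - ln x\<bar> \<le> - 2 * ln u - 20 * infdist (ln u) PP"
    using t abs_ge_self[of "ln u - ln x"] abs_ge_minus_self[of "ln u - ln x"] unfolding abs_le_iff by (elim conjE) (rule lin_aux(2))
  then show "gg x * exp (- 22 * \<bar>ln u - ln x\<bar>) \<le> gg u"
    using assms by (simp add: gg_def exp_add[symmetric])
qed

lemma gg_le: "gg x \<le> indicator {1..} x / x^2"
proof (cases "1 \<le> x")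
  case True
  have "gg x \<le> exp (- 2 * ln x)"
    using True by (simp add: gg_def infdist_nonneg)
  also have "exp (- 2 * ln x) = 1 / x^2"
  proof -
    have "exp (2 * ln x) = exp (ln x + ln x)" by (simp only: mult_2)
    also have "\<dots> = x * x" using True by (simp only: exp_add) simp
    finally show ?thesis by (simp add: exp_minus power2_eq_square divide_inverse)
  qed
  finally show ?thesis using True by simp
qed (simp add: gg_def)

lemma gg_at_P: "gg (exp (2 ^ k)) = exp (- 2 * 2 ^ k)"
proof -
  have "(2::real) ^ k \<in> PP" by (simp add: PP_def)
  moreover have "1 \<le> exp ((2::real) ^ k)" by simp
  ultimately show ?thesis by (simp add: gg_def)
qed

lemma infdist_mid: "infdist (3 * 2 ^ k / 2) PP \<ge> 2 ^ k / 2"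
proof -
  have ne: "PP \<noteq> {}" by (simp add: PP_def)
  have "2 ^ k / 2 \<le> dist (3 * 2 ^ k / 2) a" if "a \<in> PP" for a :: real
  proof -
    from that obtain j where a: "a = 2 ^ j" unfolding PP_def by auto
    show ?thesis
    proof (cases "j \<le> k")
      case True
      then have "(2::real) ^ j \<le> 2 ^ k" by (intro power_increasing) auto
      then have "3 * 2 ^ k / 2 - 2 ^ j \<ge> (2::real) ^ k / 2" by linarith
      then show ?thesis unfolding a dist_real_def using abs_ge_self[of "3 * 2 ^ k / 2 - (2::real) ^ j"] by linarith
    next
      case False
      then have "(2::real) ^ Suc k \<le> 2 ^ j" by (intro power_increasing) auto
      then have "2 ^ j - 3 * 2 ^ k / 2 \<ge> (2::real) ^ k / 2" by simp
      then show ?thesis unfolding a dist_real_def using abs_ge_minus_self[of "3 * 2 ^ k / 2 - (2::real) ^ j"] by linarith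
    qed
  qed
  then show ?thesis using ne unfolding infdist_notempty[OF ne]
    by (intro cINF_greatest) auto
qed

lemma gg_at_mid: "gg (exp (3 * 2 ^ k / 2)) \<le> exp (- 13 * 2 ^ k)"
proof -
  have "1 \<le> exp (3 * (2::real) ^ k / 2)" by simp
  then have "gg (exp (3 * 2 ^ k / 2)) = exp (- 3 * 2 ^ k - 20 * infdist (3 * 2 ^ k / 2) PP)"
    by (simp add: gg_def)
  also have "\<dots> \<le> exp (- 13 * 2 ^ k)"
    using infdist_mid[of k] by simp
  finally show ?thesis .
qed

lemma int_inv_sq: "(\<integral>\<^sup>+x. ennreal (indicator {1..} x / x^2) \<partial>lborel) = 1"
proof -
  have "((\<lambda>x::real. 1 / x ^ 2) has_integral 1 / (real (2 - 1) * 1 ^ (2 - 1))) {1..}"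
    by (rule has_integral_inverse_power_to_inf) auto
  then have "((\<lambda>x::real. 1 / x ^ 2) has_integral 1) {1..}" by simp
  then have "((\<lambda>x::real. if x \<in> {1..} then 1 / x ^ 2 else 0) has_integral 1) UNIV"
    by (simp only: has_integral_restrict_UNIV)
  then have "((\<lambda>x::real. indicator {1..} x / x ^ 2) has_integral 1) UNIV"
    by (rule has_integral_eq[rotated]) (simp add: indicator_def)
  from nn_integral_has_integral_lborel[OF _ _ this] show ?thesis
    by (auto simp: indicator_def)
qed

lemma int_inv_sq_neg: "(\<integral>\<^sup>+x. ennreal (indicator {..-1} x / x^2) \<partial>lborel) = 1"
proof -
  have "(\<integral>\<^sup>+x. ennreal (indicator {..-1} x / x^2) \<partial>lborel)
      = (\<integral>\<^sup>+x. ennreal (indicator {..-1} x / x^2) \<partial>(distr lborel borel uminus))"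
    by (simp add: lborel_distr_uminus)
  also have "\<dots> = (\<integral>\<^sup>+x. ennreal (indicator {..-1} (-x) / (-x)^2) \<partial>lborel)"
    by (subst nn_integral_distr) auto
  also have "\<dots> = (\<integral>\<^sup>+x. ennreal (indicator {1..} x / x^2) \<partial>lborel)"
    by (intro nn_integral_cong) (simp add: indicator_def)
  finally show ?thesis using int_inv_sq by simp
qed

lemma gg_lower_12: "x \<in> {1..2} \<Longrightarrow> exp (-42) \<le> gg x"
proof -
  assume x: "x \<in> {1..2}"
  have "infdist 0 PP \<le> dist 0 (1::real)"
    by (rule infdist_le) (unfold PP_def, metis power_0 rangeI)
  then have g1: "exp (-20) \<le> gg 1" by (simp add: gg_def)
  have "ln x \<le> ln 2" using x by auto
  also have "ln (2::real) \<le> 1" using ln_le_minus_one[of 2] by simp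
  finally have lx: "\<bar>ln x - ln 1\<bar> \<le> 1" using x by simp
  have "exp (-42::real) = exp (-20) * exp (-22 * 1)" by (simp flip: exp_add)
  also have "\<dots> \<le> gg 1 * exp (- 22 * \<bar>ln x - ln 1\<bar>)"
  proof (rule mult_mono)
    show "exp (-22 * 1) \<le> exp (- 22 * \<bar>ln x - ln 1\<bar>)" using lx by (subst exp_le_cancel_iff) (rule mult_left_mono_neg, auto)
  qed (use g1 gg_nonneg in auto)
  also have "\<dots> \<le> gg x" using x by (intro gg_ratio(2)) auto
  finally show ?thesis .
qed

definition Zr :: real where "Zr = enn2real (\<integral>\<^sup>+x. ennreal (gg x) \<partial>lborel)"

lemma Z_props: "(\<integral>\<^sup>+x. ennreal (gg x) \<partial>lborel) = ennreal Zr" "0 < Zr" "Zr \<le> 1"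
proof -
  have up: "(\<integral>\<^sup>+x. ennreal (gg x) \<partial>lborel) \<le> 1"
  proof -
    have "(\<integral>\<^sup>+x. ennreal (gg x) \<partial>lborel) \<le> (\<integral>\<^sup>+x. ennreal (indicator {1..} x / x^2) \<partial>lborel)"
      by (intro nn_integral_mono ennreal_leI gg_le)
    then show ?thesis by (simp only: int_inv_sq)
  qed
  have "ennreal (exp (-42)) = (\<integral>\<^sup>+x. ennreal (exp (-42)) * indicator {1..2::real} x \<partial>lborel)"
    by (subst nn_integral_cmult_indicator) auto
  also have "\<dots> \<le> (\<integral>\<^sup>+x. ennreal (gg x) \<partial>lborel)"
    by (intro nn_integral_mono) (auto simp: indicator_def gg_lower_12 ennreal_leI)
  finally have lo: "ennreal (exp (-42)) \<le> (\<integral>\<^sup>+x. ennreal (gg x) \<partial>lborel)" .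
  have fin: "(\<integral>\<^sup>+x. ennreal (gg x) \<partial>lborel) \<noteq> \<top>" using up
    by (metis ennreal_one_neq_top neq_top_trans)
  show e: "(\<integral>\<^sup>+x. ennreal (gg x) \<partial>lborel) = ennreal Zr"
    unfolding Zr_def using fin by (simp add: ennreal_enn2real_if)
  have "exp (-42) \<le> Zr" using lo unfolding e by (auto simp: ennreal_le_iff2)
  then show "0 < Zr" using exp_gt_zero[of "-42::real"] by linarith
  show "Zr \<le> 1" using up unfolding e by (simp add: ennreal_le_1)
qed

lemma loc_density_bounds:
  fixes h :: "real \<Rightarrow> real"
  assumes [measurable]: "h \<in> borel_measurable borel" and h0: "\<And>x. 0 \<le> h x" and d: "0 < d"
    and ab: "\<And>u. z < u \<Longrightarrow> u \<le> z + d \<Longrightarrow> a \<le> h u \<and> h u \<le> b" and a: "0 \<le> a"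
  shows "a * d \<le> measure (density lborel h) {z<..z+d}" "measure (density lborel h) {z<..z+d} \<le> b * d"
proof -
  have b: "0 \<le> b" using ab[of "z + d"] a d by auto
  have E: "emeasure (density lborel h) {z<..z+d} = (\<integral>\<^sup>+x. ennreal (h x) * indicator {z<..z+d} x \<partial>lborel)"
    by (rule emeasure_density) auto
  have "(\<integral>\<^sup>+x. ennreal (h x) * indicator {z<..z+d} x \<partial>lborel) \<le> (\<integral>\<^sup>+x. ennreal b * indicator {z<..z+d} x \<partial>lborel)"
    by (intro nn_integral_mono) (auto simp: indicator_def ab ennreal_leI)
  also have "\<dots> = ennreal b * emeasure lborel {z<..z+d}"
    by (subst nn_integral_cmult_indicator) auto
  also have "\<dots> = ennreal b * ennreal d" using d by (subst emeasure_lborel_Ioc) auto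
  also have "\<dots> = ennreal (b * d)" using b d by (simp add: ennreal_mult)
  finally have up: "emeasure (density lborel h) {z<..z+d} \<le> ennreal (b * d)" unfolding E .
  have "ennreal (a * d) = ennreal a * ennreal d"
    using a d by (simp add: ennreal_mult)
  also have "\<dots> = ennreal a * emeasure lborel {z<..z+d}" using d by (subst emeasure_lborel_Ioc) auto
  also have "\<dots> = (\<integral>\<^sup>+x. ennreal a * indicator {z<..z+d} x \<partial>lborel)"
    by (subst nn_integral_cmult_indicator) auto
  also have "\<dots> \<le> (\<integral>\<^sup>+x. ennreal (h x) * indicator {z<..z+d} x \<partial>lborel)"
    by (intro nn_integral_mono) (auto simp: indicator_def ab ennreal_leI)
  finally have lo: "ennreal (a * d) \<le> emeasure (density lborel h) {z<..z+d}" unfolding E .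
  have fin: "emeasure (density lborel h) {z<..z+d} \<noteq> \<top>"
    using up by (metis ennreal_neq_top neq_top_trans)
  have e: "emeasure (density lborel h) {z<..z+d} = ennreal (measure (density lborel h) {z<..z+d})"
    using fin by (rule emeasure_eq_ennreal_measure)
  show "a * d \<le> measure (density lborel h) {z<..z+d}" using lo unfolding e
    using measure_nonneg[of "density lborel h" "{z<..z+d}"] by (auto simp: ennreal_le_iff2)
  show "measure (density lborel h) {z<..z+d} \<le> b * d" using up b d unfolding e by simp
qed

definition G1 :: "real measure" where "G1 = density lborel (\<lambda>y. ennreal (gg y / Zr))"

definition pF :: "real \<Rightarrow> real" where "pF y = indicator {..-1} y / (2 * y^2) + gg y / (2 * Zr)"

definition FF :: "real measure" where "FF = density lborel (\<lambda>y. ennreal (pF y))"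

lemma gg_zero: "x < 1 \<Longrightarrow> gg x = 0" by (simp add: gg_def)

lemma int_gg_scaled: "c > 0 \<Longrightarrow> (\<integral>\<^sup>+y. ennreal (gg y / c) \<partial>lborel) = ennreal (Zr / c)"
proof -
  assume c: "c > 0"
  have "(\<integral>\<^sup>+y. ennreal (gg y / c) \<partial>lborel) = (\<integral>\<^sup>+y. ennreal (gg y) * ennreal (1 / c) \<partial>lborel)"
    using c by (intro nn_integral_cong) (simp add: ennreal_mult''[symmetric] gg_nonneg)
  also have "\<dots> = (\<integral>\<^sup>+y. ennreal (gg y) \<partial>lborel) * ennreal (1 / c)"
    by (rule nn_integral_multc) simp
  also have "\<dots> = ennreal (Zr / c)" using Z_props c by (simp add: ennreal_mult''[symmetric])
  finally show ?thesis .
qed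

lemma sets_G1[simp]: "sets G1 = sets borel" by (simp add: G1_def)
lemma sets_FF[simp]: "sets FF = sets borel" by (simp add: FF_def)

lemma prob_G1: "prob_space G1"
proof
  have "emeasure G1 (space G1) = (\<integral>\<^sup>+y. ennreal (gg y / Zr) \<partial>lborel)"
    by (simp add: G1_def emeasure_density)
  also have "\<dots> = 1" using int_gg_scaled[of Zr] Z_props by simp
  finally show "emeasure G1 (space G1) = 1" .
qed

lemma G1_nonneg: "AE x in G1. 0 \<le> x"
proof -
  have "AE x in lborel. 0 < ennreal (gg x / Zr) \<longrightarrow> 0 \<le> x"
    by (intro AE_I2) (auto simp: gg_def split: if_splits)
  then show ?thesis unfolding G1_def by (subst AE_density) auto
qed

lemma pF_nonneg: "0 \<le> pF y"
  using Z_props by (simp add: pF_def gg_nonneg)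

lemma pF_meas[measurable]: "pF \<in> borel_measurable borel"
  unfolding pF_def by measurable

lemma nn_integral_scale:
  fixes f :: "real \<Rightarrow> real"
  assumes [measurable]: "f \<in> borel_measurable borel" and "\<And>y. 0 \<le> f y" "0 \<le> c"
  shows "(\<integral>\<^sup>+y. ennreal (f y * c) \<partial>lborel) = (\<integral>\<^sup>+y. ennreal (f y) \<partial>lborel) * ennreal c"
proof -
  have "(\<integral>\<^sup>+y. ennreal (f y * c) \<partial>lborel) = (\<integral>\<^sup>+y. ennreal (f y) * ennreal c \<partial>lborel)"
    using assms by (intro nn_integral_cong) (rule ennreal_mult)
  also have "\<dots> = (\<integral>\<^sup>+y. ennreal (f y) \<partial>lborel) * ennreal c"
    by (rule nn_integral_multc) simp
  finally show ?thesis .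
qed

lemma int_neg_half: "(\<integral>\<^sup>+y. ennreal (indicator {..-1} y / (2 * y^2)) \<partial>lborel) = ennreal (1/2)"
proof -
  have "(\<integral>\<^sup>+y. ennreal (indicator {..-1} y / (2 * y^2)) \<partial>lborel) = (\<integral>\<^sup>+y. ennreal (indicator {..-1} y / y^2 * (1/2)) \<partial>lborel)"
    by (intro nn_integral_cong) (simp add: field_simps)
  also have "\<dots> = (\<integral>\<^sup>+y. ennreal (indicator {..-1} y / y^2) \<partial>lborel) * ennreal (1/2)"
    by (rule nn_integral_scale) auto
  also have "\<dots> = ennreal (1/2)" by (simp only: int_inv_sq_neg mult_1)
  finally show ?thesis .
qed

lemma prob_FF: "prob_space FF"
proof
  have "emeasure FF (space FF) = (\<integral>\<^sup>+y. ennreal (pF y) \<partial>lborel)"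
    by (simp add: FF_def emeasure_density)
  also have "\<dots> = (\<integral>\<^sup>+y. ennreal (indicator {..-1} y / (2 * y^2)) + ennreal (gg y / (2 * Zr)) \<partial>lborel)"
    using Z_props by (intro nn_integral_cong) (simp add: pF_def gg_nonneg)
  also have "\<dots> = (\<integral>\<^sup>+y. ennreal (indicator {..-1} y / (2 * y^2)) \<partial>lborel) + (\<integral>\<^sup>+y. ennreal (gg y / (2 * Zr)) \<partial>lborel)"
    by (subst nn_integral_add) auto
  also have "\<dots> = ennreal (1/2) + ennreal (Zr / (2 * Zr))"
    using Z_props by (simp only: int_neg_half int_gg_scaled)
  also have "\<dots> = ennreal (1/2 + Zr / (2 * Zr))" using Z_props by (intro ennreal_plus[symmetric]) auto
  also have "\<dots> = 1" using Z_props by simp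
  finally show "emeasure FF (space FF) = 1" .
qed

lemma q1_FF: "q1 FF = 1/2"
proof -
  have "emeasure FF {0..} = (\<integral>\<^sup>+y. ennreal (pF y) * indicator {0..} y \<partial>lborel)"
    unfolding FF_def by (rule emeasure_density) auto
  also have "\<dots> = (\<integral>\<^sup>+y. ennreal (gg y / (2 * Zr)) \<partial>lborel)"
    by (intro nn_integral_cong) (auto simp: pF_def indicator_def gg_zero)
  also have "\<dots> = ennreal (Zr / (2 * Zr))" using Z_props by (simp only: int_gg_scaled)
  also have "\<dots> = ennreal (1/2)" using Z_props by simp
  finally have e: "emeasure FF {0..} = ennreal (1/2)" .
  have "enn2real (ennreal (1/2::real)) = 1/2" by (rule enn2real_ennreal) simp
  then show ?thesis unfolding q1_def measure_def e .
qed

lemma F1_FF: "F1 FF = G1"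
proof -
  have "F1 FF = density lborel (\<lambda>y. ennreal (pF y) * ennreal (indicator {0..} y / (1/2)))"
    unfolding F1_def q1_FF unfolding FF_def by (rule density_density_eq) auto
  also have "(\<lambda>y. ennreal (pF y) * ennreal (indicator {0..} y / (1/2))) = (\<lambda>y. ennreal (gg y / Zr))"
  proof (rule ext)
    fix y
    have "pF y * (indicator {0..} y / (1/2)) = gg y / Zr"
      by (auto simp: pF_def indicator_def gg_zero)
    then show "ennreal (pF y) * ennreal (indicator {0..} y / (1/2)) = ennreal (gg y / Zr)"
      by (subst ennreal_mult''[symmetric]) auto
  qed
  finally show ?thesis unfolding G1_def .
qed

lemma F2_FF: "F2 FF = density lborel (\<lambda>y. ennreal (indicator {..-1} y / y^2))"
proof -
  have "F2 FF = density lborel (\<lambda>y. ennreal (pF y) * ennreal (indicator {..<0} y / (1 - 1/2)))"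
    unfolding F2_def q1_FF unfolding FF_def by (rule density_density_eq) auto
  also have "(\<lambda>y. ennreal (pF y) * ennreal (indicator {..<0} y / (1 - 1/2))) = (\<lambda>y. ennreal (indicator {..-1} y / y^2))"
  proof (rule ext)
    fix y
    have "pF y * (indicator {..<0} y / (1 - 1/2)) = indicator {..-1} y / y^2"
      by (auto simp: pF_def indicator_def gg_zero)
    then show "ennreal (pF y) * ennreal (indicator {..<0} y / (1 - 1/2)) = ennreal (indicator {..-1} y / y^2)"
      by (subst ennreal_mult''[symmetric]) auto
  qed
  finally show ?thesis .
qed

lemma ln_close:
  fixes z v K :: real
  assumes "0 < z" "1 \<le> K" "z / K \<le> v" "v \<le> K * z"
  shows "\<bar>ln v - ln z\<bar> \<le> ln K"
proof -
  have K0: "K > 0" using assms by simp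
  have zK: "z / K > 0" using assms by simp
  have v0: "v > 0" using zK assms by linarith
  have "ln v \<le> ln (K * z)" using v0 assms by simp
  also have "\<dots> = ln K + ln z" using K0 assms by (simp add: ln_mult)
  finally have 1: "ln v - ln z \<le> ln K" by simp
  have "ln (z / K) \<le> ln v" using zK v0 assms by simp
  moreover have "ln (z / K) = ln z - ln K" using K0 assms by (simp add: ln_div)
  ultimately have 2: "ln z - ln v \<le> ln K" by simp
  show ?thesis using 1 2 by linarith
qed

lemma loc_G1_bounds:
  assumes z: "1 \<le> z" and d: "0 < d" and K: "1 \<le> K"
    and rng: "\<And>v. z' < v \<Longrightarrow> v \<le> z' + d \<Longrightarrow> 1 \<le> v \<and> z / K \<le> v \<and> v \<le> K * z"
  shows "gg z * d / Zr * exp (- 22 * ln K) \<le> loc G1 d z'"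
    and "loc G1 d z' \<le> gg z * d / Zr * exp (22 * ln K)"
proof -
  have Z: "0 < Zr" using Z_props by simp
  have hb: "gg z * exp (- 22 * ln K) / Zr \<le> gg u / Zr \<and> gg u / Zr \<le> gg z * exp (22 * ln K) / Zr"
    if "z' < u" "u \<le> z' + d" for u
  proof -
    have u: "1 \<le> u" "z / K \<le> u" "u \<le> K * z" using rng[OF that] by auto
    have D: "\<bar>ln u - ln z\<bar> \<le> ln K" using ln_close[of z K u] z K u by simp
    have "gg u \<le> gg z * exp (22 * \<bar>ln u - ln z\<bar>)" using gg_ratio(1)[of z u] z u by simp
    also have "\<dots> \<le> gg z * exp (22 * ln K)"
      using D gg_nonneg[of z] by (intro mult_left_mono) auto
    finally have up: "gg u \<le> gg z * exp (22 * ln K)" .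
    have "gg z * exp (- 22 * ln K) \<le> gg z * exp (- 22 * \<bar>ln u - ln z\<bar>)"
      using D gg_nonneg[of z] by (intro mult_left_mono) auto
    also have "\<dots> \<le> gg u" using gg_ratio(2)[of z u] z u by simp
    finally have lo: "gg z * exp (- 22 * ln K) \<le> gg u" .
    show ?thesis using up lo Z by (simp add: divide_right_mono)
  qed
  have meas: "(\<lambda>y. gg y / Zr) \<in> borel_measurable borel" by measurable
  have nn: "\<And>y. 0 \<le> gg y / Zr" using Z gg_nonneg by simp
  have a0: "0 \<le> gg z * exp (- 22 * ln K) / Zr" using Z gg_nonneg[of z] by simp
  note B = loc_density_bounds[where z=z', OF meas nn d hb a0]
  show "gg z * d / Zr * exp (- 22 * ln K) \<le> loc G1 d z'"
    using B(1) unfolding loc_def G1_def by (simp add: field_simps)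
  show "loc G1 d z' \<le> gg z * d / Zr * exp (22 * ln K)"
    using B(2) unfolding loc_def G1_def by (simp add: field_simps)
qed

lemma ratio_close:
  fixes A D x y \<epsilon> :: real
  assumes A: "0 < A" and D: "0 \<le> D"
    and x: "A * exp (- 22 * D) \<le> x" "x \<le> A * exp (22 * D)"
    and y: "A * exp (- 22 * D) \<le> y" "y \<le> A * exp (22 * D)"
    and e: "exp (44 * D) \<le> 1 + \<epsilon>"
  shows "\<bar>x / y - 1\<bar> \<le> \<epsilon>"
proof -
  define q where "q = exp (22 * D)"
  have q: "q \<ge> 1" using D by (simp add: q_def)
  have em: "exp (- 22 * D) = 1 / q" by (simp add: q_def exp_minus field_simps)
  have q2: "exp (44 * D) = q * q" by (simp add: q_def flip: exp_add)
  have y0: "y > 0" using y(1) A em q by (smt (z3) divide_pos_pos mult_pos_pos)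
  have x0: "x > 0" using x(1) A em q by (smt (z3) divide_pos_pos mult_pos_pos)
  have "x / y \<le> (A * q) / (A / q)"
    using x y A q y0 x0 em by (intro frac_le) (auto simp: q_def)
  also have "\<dots> = q * q" using A q by (simp add: field_simps)
  finally have up: "x / y \<le> q * q" .
  have "(A / q) / (A * q) \<le> x / y"
    using x y A q y0 x0 em by (intro frac_le) (auto simp: q_def)
  moreover have "(A / q) / (A * q) = 1 / (q * q)" using A q by (simp add: field_simps)
  ultimately have lo: "1 / (q * q) \<le> x / y" by simp
  have "1 - 1 / (q * q) \<le> q * q - 1"
  proof -
    have "q * q \<ge> 1" using q by (metis mult_le_cancel_left1 order.trans less_eq_real_def zero_less_one)
    define w where "w = q * q"
    have w: "w \<ge> 1" using \<open>q * q \<ge> 1\<close> by (simp add: w_def)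
    have "1 - 1 / w = (w - 1) / w" using w by (simp add: field_simps)
    also have "\<dots> \<le> (w - 1) / 1" using w by (intro divide_left_mono) auto
    finally show ?thesis by (simp add: w_def)
  qed
  then show ?thesis using up lo e q2 by (simp add: abs_le_iff)
qed

lemma L_G1: assumes d: "0 < d" shows "in_L_Delta d G1"
  unfolding in_L_Delta_def
proof (intro conjI allI impI)
  have Z: "0 < Zr" using Z_props by simp
  show "\<forall>\<^sub>F x in at_top. 0 < loc G1 d x"
    using eventually_ge_at_top[of "max 1 d"]
  proof eventually_elim
    case (elim z)
    have "gg z * d / Zr * exp (- 22 * ln 2) \<le> loc G1 d z"
      by (rule loc_G1_bounds(1)) (use elim d in auto)
    moreover have "0 < gg z * d / Zr * exp (- 22 * ln 2)"
      using gg_pos[of z] elim d Z by auto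
    ultimately show ?case by linarith
  qed
  fix t \<epsilon> :: real assume t: "t > 0" and e: "\<epsilon> > 0"
  define T where "T = t + d"
  have T: "T > 0" using t d by (simp add: T_def)
  have lim: "((\<lambda>z. exp (44 * ln ((z + T) / (z - T)))) \<longlongrightarrow> 1) at_top"
    by real_asymp
  have ev1: "\<forall>\<^sub>F z in at_top. exp (44 * ln ((z + T) / (z - T))) < 1 + \<epsilon>"
    using order_tendstoD(2)[OF lim] e by simp
  show "\<forall>\<^sub>F x in at_top. \<forall>s. \<bar>s\<bar> \<le> t \<longrightarrow> \<bar>loc G1 d (x + s) / loc G1 d x - 1\<bar> \<le> \<epsilon>"
    using ev1 eventually_ge_at_top[of "2 * T + 1"]
  proof eventually_elim
    case (elim z)
    define K where "K = (z + T) / (z - T)"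
    have zT: "z - T > 0" using elim T by simp
    have K1: "1 \<le> K" using zT T by (simp add: K_def field_simps)
    have z1: "1 \<le> z" using elim T by simp
    have rng: "1 \<le> v \<and> z / K \<le> v \<and> v \<le> K * z" if "z - T \<le> v" "v \<le> z + T" for v
    proof -
      have "z / K = z * (z - T) / (z + T)" using zT T by (simp add: K_def field_simps)
      also have "\<dots> \<le> z - T" using zT T z1 by (simp add: field_simps)
      finally have a: "z / K \<le> z - T" .
      have "z + T \<le> z * (z + T) / (z - T)" using zT T z1 by (simp add: field_simps)
      also have "\<dots> = K * z" by (simp add: K_def)
      finally have b: "z + T \<le> K * z" .
      show ?thesis using a b that elim T by auto
    qed
    define A where "A = gg z * d / Zr"
    have A: "A > 0" using gg_pos[of z] z1 d Z by (simp add: A_def)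
    have lnK: "0 \<le> ln K" using K1 by simp
    have bnd: "A * exp (- 22 * ln K) \<le> loc G1 d (z + s) \<and> loc G1 d (z + s) \<le> A * exp (22 * ln K)"
      if "\<bar>s\<bar> \<le> t" for s
    proof -
      have r: "1 \<le> v \<and> z / K \<le> v \<and> v \<le> K * z" if "z + s < v" "v \<le> z + s + d" for v
        using rng[of v] that \<open>\<bar>s\<bar> \<le> t\<close> by (auto simp: T_def abs_le_iff)
      show ?thesis using loc_G1_bounds[OF z1 d K1 r] by (auto simp: A_def)
    qed
    show ?case
    proof (intro allI impI)
      fix s assume s: "\<bar>s\<bar> \<le> t"
      have e44: "exp (44 * ln K) \<le> 1 + \<epsilon>" using elim by (simp add: K_def)
      show "\<bar>loc G1 d (z + s) / loc G1 d z - 1\<bar> \<le> \<epsilon>"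
        using bnd[OF s] bnd[of 0] t
        by (intro ratio_close[OF A lnK _ _ _ _ e44]) auto
    qed
  qed
qed

lemma dom_G1:
  assumes d: "0 < d"
  shows "\<exists>C>0. \<forall>\<^sub>F z in at_top. \<forall>u. z/2 - d \<le> u \<longrightarrow> u \<le> z \<longrightarrow> loc G1 d u \<le> C * loc G1 d z"
proof (intro exI conjI)
  show "exp (44 * ln 4) > (0::real)" by simp
  show "\<forall>\<^sub>F z in at_top. \<forall>u. z/2 - d \<le> u \<longrightarrow> u \<le> z \<longrightarrow> loc G1 d u \<le> exp (44 * ln 4) * loc G1 d z"
    using eventually_ge_at_top[of "8 * d + 8"]
  proof eventually_elim
    case (elim z)
    have z1: "1 \<le> z" using elim d by simp
    have K: "1 \<le> (4::real)" by simp
    have lo: "gg z * d / Zr * exp (- 22 * ln 4) \<le> loc G1 d z"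
      by (rule loc_G1_bounds(1)[OF z1 d K]) (use elim d in auto)
    show ?case
    proof (intro allI impI)
      fix u assume u: "z/2 - d \<le> u" "u \<le> z"
      have up: "loc G1 d u \<le> gg z * d / Zr * exp (22 * ln 4)"
        by (rule loc_G1_bounds(2)[OF z1 d K]) (use elim d u in auto)
      have "gg z * d / Zr * exp (22 * ln 4) = exp (44 * ln 4) * (gg z * d / Zr * exp (- 22 * ln 4))"
        by (simp add: field_simps flip: exp_add)
      also have "\<dots> \<le> exp (44 * ln 4) * loc G1 d z" using lo by (intro mult_left_mono) auto
      finally show "loc G1 d u \<le> exp (44 * ln 4) * loc G1 d z" using up by linarith
    qed
  qed
qed

lemma S_loc_G1: "S_loc G1"
  unfolding S_loc_def
  using conv_asymp[OF prob_G1 sets_G1 G1_nonneg _ L_G1 dom_G1] L_G1 by auto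

lemma exp_ge_2T: "0 \<le> (T::real) \<Longrightarrow> T \<le> exp T"
  using exp_ge_add_one_self[of T] by linarith

lemma not_lad_G1: "\<not> locally_almost_decreasing G1"
proof
  assume "locally_almost_decreasing G1"
  then obtain x0 where x0: "x0 \<ge> 0" and H: "\<forall>d>0. (\<forall>x\<ge>x0. loc G1 d x > 0) \<and>
        bdd_above {loc G1 d y / loc G1 d x | x y. x0 \<le> x \<and> x \<le> y}"
    unfolding locally_almost_decreasing_def by blast
  from H[rule_format, of 1] obtain B where B: "\<And>r. r \<in> {loc G1 1 y / loc G1 1 x | x y. x0 \<le> x \<and> x \<le> y} \<Longrightarrow> r \<le> B"
    by (auto simp: bdd_above_def)
  obtain k :: nat where k: "max x0 \<bar>B\<bar> + 44 < 2 ^ k"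
    using real_arch_pow[of 2 "max x0 \<bar>B\<bar> + 44"] by auto
  define T :: real where "T = 2 ^ k"
  have T: "T > max x0 \<bar>B\<bar> + 44" using k by (simp add: T_def)
  define x where "x = exp (3 * 2 ^ k / 2 :: real)"
  define y where "y = exp (2 ^ Suc k :: real)"
  have x1: "1 \<le> x" by (simp add: x_def)
  have y1: "1 \<le> y" by (simp add: y_def)
  have xy: "x \<le> y" by (simp add: x_def y_def)
  have "x0 \<le> T" using T by simp
  also have "T \<le> 3 * T / 2" using T by simp
  also have "\<dots> \<le> x" using exp_ge_2T[of "3 * T / 2"] T by (simp add: x_def T_def)
  finally have x0x: "x0 \<le> x" .
  have Z: "0 < Zr" using Z_props by simp
  have K2: "1 \<le> (2::real)" by simp
  have ly: "gg y * 1 / Zr * exp (- 22 * ln 2) \<le> loc G1 1 y"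
    by (rule loc_G1_bounds(1)[OF y1 _ K2]) (use y1 in auto)
  have lx: "loc G1 1 x \<le> gg x * 1 / Zr * exp (22 * ln 2)"
    by (rule loc_G1_bounds(2)[OF x1 _ K2]) (use x1 in auto)
  have lxpos: "0 < loc G1 1 x" using H x0x by auto
  have ggy: "gg y = exp (- 4 * T)" using gg_at_P[of "Suc k"] by (simp add: y_def T_def)
  have ggx: "gg x \<le> exp (- 13 * T)" using gg_at_mid[of k] by (simp add: x_def T_def)
  define a1 where "a1 = exp (- 4 * T) / Zr * exp (- 22 * ln 2)"
  define b1 where "b1 = exp (- 13 * T) / Zr * exp (22 * ln 2)"
  have a1: "a1 \<le> loc G1 1 y" using ly ggy by (simp add: a1_def)
  have b1: "loc G1 1 x \<le> b1" using lx ggx Z unfolding b1_def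
    by (smt (verit) divide_right_mono exp_gt_zero mult_right_mono div_by_1 mult_1_right)
  have b1pos: "0 < b1" using Z by (simp add: b1_def)
  have ab: "a1 = b1 * exp (9 * T - 44 * ln 2)"
    unfolding a1_def b1_def by (simp add: mult_exp_exp field_simps)
  have "B < 9 * T - 44" using T by linarith
  also have "9 * T - 44 \<le> 9 * T - 44 * ln 2" using ln_le_minus_one[of 2] by simp
  also have "\<dots> < exp (9 * T - 44 * ln 2)" using exp_gt_self by blast
  also have "\<dots> = a1 / b1" using ab b1pos by simp
  also have "\<dots> \<le> loc G1 1 y / b1" using a1 b1pos by (simp add: divide_right_mono)
  also have "\<dots> \<le> loc G1 1 y / loc G1 1 x"
    using b1 lxpos a1 b1pos ab by (intro divide_left_mono) (auto intro: order.trans[OF _ a1] simp: a1_def Z)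
  also have "\<dots> \<le> B" using B x0x xy by blast
  finally show False by simp
qed

lemma emeasure_lborel_Iic_inf: "emeasure lborel {..a::real} = \<infinity>"
proof (rule ccontr)
  assume "emeasure lborel {..a::real} \<noteq> \<infinity>"
  then obtain r where r: "emeasure lborel {..a} = ennreal r" "0 \<le> r"
    by (metis ennreal_cases infinity_ennreal_def)
  have "ennreal (r + 1) = emeasure lborel {a - (r + 1)<..a}" using r by simp
  also have "\<dots> \<le> emeasure lborel {..a}" by (intro emeasure_mono) auto
  finally show False using r by simp
qed

lemma heavy_FF: "heavy_tailed_F2 FF"
  unfolding heavy_tailed_F2_def
proof (intro allI impI)
  fix \<epsilon> :: real assume e: "\<epsilon> > 0"
  have "\<forall>\<^sub>F w in at_top. w ^ 2 \<le> exp (\<epsilon> * w)" using e by real_asymp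
  then obtain W0 where W0: "\<And>w. w \<ge> W0 \<Longrightarrow> w ^ 2 \<le> exp (\<epsilon> * w)"
    by (auto simp: eventually_at_top_linorder)
  define W where "W = max 1 W0"
  have "(\<integral>\<^sup>+y. ennreal (exp (\<epsilon> * (- y))) \<partial>(F2 FF))
      = (\<integral>\<^sup>+y. ennreal (indicator {..-1} y / y^2) * ennreal (exp (\<epsilon> * (- y))) \<partial>lborel)"
    unfolding F2_FF by (subst nn_integral_density) auto
  also have "\<dots> \<ge> (\<integral>\<^sup>+y. indicator {..-W} y \<partial>lborel)"
  proof (intro nn_integral_mono)
    fix y :: real
    show "indicator {..-W} y \<le> ennreal (indicator {..-1} y / y^2) * ennreal (exp (\<epsilon> * (- y)))"
    proof (cases "y \<le> -W")
      case True
      then have y1: "y \<le> -1" "-y \<ge> W0" by (auto simp: W_def)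
      have "(-y)^2 \<le> exp (\<epsilon> * (-y))" using W0[OF y1(2)] .
      then have "1 \<le> exp (\<epsilon> * (- y)) / y^2" using y1 by (simp add: field_simps)
      then have "1 \<le> indicator {..-1} y / y^2 * exp (\<epsilon> * (- y))" using y1 by simp
      then show ?thesis using True y1 by (simp add: ennreal_mult''[symmetric] ennreal_leI del: ennreal_1 ennreal_eq_1 ennreal_le_1)
    qed simp
  qed
  also have "(\<integral>\<^sup>+y. indicator {..-W} y \<partial>lborel) = \<infinity>" by (simp add: emeasure_lborel_Iic_inf)
  finally show "(\<integral>\<^sup>+y. ennreal (exp (\<epsilon> * (- y))) \<partial>(F2 FF)) = \<infinity>" by (simp add: top_unique)
qed

lemma pF_pos_part: "1 \<le> u \<Longrightarrow> pF u = gg u / (2 * Zr)"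
  by (simp add: pF_def indicator_def)

lemma locFF_bounds:
  assumes z: "1 \<le> z" and K: "1 \<le> K"
    and rng: "\<And>v. z' < v \<Longrightarrow> v \<le> z' + 1 \<Longrightarrow> 1 \<le> v \<and> z / K \<le> v \<and> v \<le> K * z"
  shows "gg z * exp (- 22 * ln K) / (2 * Zr) \<le> loc FF 1 z'"
    and "loc FF 1 z' \<le> gg z * exp (22 * ln K) / (2 * Zr)"
proof -
  have Z: "0 < Zr" using Z_props by simp
  have hb: "gg z * exp (- 22 * ln K) / (2 * Zr) \<le> pF u \<and> pF u \<le> gg z * exp (22 * ln K) / (2 * Zr)"
    if "z' < u" "u \<le> z' + 1" for u
  proof -
    have u: "1 \<le> u" "z / K \<le> u" "u \<le> K * z" using rng[OF that] by auto
    have D: "\<bar>ln u - ln z\<bar> \<le> ln K" using ln_close[of z K u] z K u by simp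
    have "gg u \<le> gg z * exp (22 * \<bar>ln u - ln z\<bar>)" using gg_ratio(1)[of z u] z u by simp
    also have "\<dots> \<le> gg z * exp (22 * ln K)"
      using D gg_nonneg[of z] by (intro mult_left_mono) auto
    finally have up: "gg u \<le> gg z * exp (22 * ln K)" .
    have "gg z * exp (- 22 * ln K) \<le> gg z * exp (- 22 * \<bar>ln u - ln z\<bar>)"
      using D gg_nonneg[of z] by (intro mult_left_mono) auto
    also have "\<dots> \<le> gg u" using gg_ratio(2)[of z u] z u by simp
    finally have lo: "gg z * exp (- 22 * ln K) \<le> gg u" .
    show ?thesis using up lo Z u(1) by (simp add: pF_pos_part divide_right_mono)
  qed
  have nn: "\<And>y. 0 \<le> pF y" by (rule pF_nonneg)
  have a0: "0 \<le> gg z * exp (- 22 * ln K) / (2 * Zr)" using Z gg_nonneg[of z] by simp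
  note B = loc_density_bounds[where z=z' and d=1, OF pF_meas nn zero_less_one hb a0]
  show "gg z * exp (- 22 * ln K) / (2 * Zr) \<le> loc FF 1 z'"
    using B(1) unfolding loc_def FF_def by simp
  show "loc FF 1 z' \<le> gg z * exp (22 * ln K) / (2 * Zr)"
    using B(2) unfolding loc_def FF_def by simp
qed

lemma FF_neg_interval:
  assumes "b \<le> -1" "1 \<le> Y" "-Y \<le> b - 1"
  shows "1 / (2 * Y^2) \<le> measure FF {b - 1<..b - 1 + 1}"
proof -
  have hb: "1 / (2 * Y^2) \<le> pF u \<and> pF u \<le> 1/2" if "b - 1 < u" "u \<le> b - 1 + 1" for u
  proof -
    have u: "u \<le> -1" "-Y \<le> u" using that assms by auto
    have gu: "gg u = 0" using u by (simp add: gg_zero)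
    have "(-u) * (-u) \<le> Y * Y" using u assms by (intro mult_mono) auto
    then have uY: "u^2 \<le> Y^2" by (simp add: power2_eq_square)
    have "1 * 1 \<le> (-u) * (-u)" using u by (intro mult_mono) auto
    then have u1: "1 \<le> u^2" by (simp add: power2_eq_square)
    have p: "pF u = 1 / (2 * u^2)" using u gu by (simp add: pF_def)
    have Y2: "0 < Y^2" using assms by simp
    have "1 / (2 * Y^2) \<le> 1 / (2 * u^2)" using uY u1 Y2 by (intro divide_left_mono) (auto intro!: mult_pos_pos)
    moreover have "1 / (2 * u^2) \<le> 1 / (2 * 1)" using u1 by (intro divide_left_mono) auto
    ultimately show ?thesis using p by simp
  qed
  have a0: "0 \<le> 1 / (2 * Y^2)" by simp
  show ?thesis
    using loc_density_bounds(1)[where z="b - 1" and d=1, OF pF_meas pF_nonneg zero_less_one hb a0] unfolding FF_def by simp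
qed

lemma conv_FF_lower:
  assumes x1: "1 \<le> x" and y1: "1 \<le> y" and xy: "x + 1 \<le> y"
  shows "gg y * exp (- 22 * ln 3) / (2 * Zr) * (1 / (2 * y^2)) \<le> loc (FF \<star> FF) 1 x"
proof -
  interpret FF: prob_space FF by (rule prob_FF)
  have Z: "0 < Zr" using Z_props by simp
  define c where "c = gg y * exp (- 22 * ln 3) / (2 * Zr)"
  have c0: "0 \<le> c" using Z gg_nonneg[of y] by (simp add: c_def)
  define Bs where "Bs = {x - y - 1<..x - y}"
  have finc: "finite_measure (FF \<star> FF)"
    by (intro convolution_finite) (auto simp: FF.finite_measure_axioms)
  have mB: "1 / (2 * y^2) \<le> measure FF Bs"
  proof -
    have "1 / (2 * y^2) \<le> measure FF {(x - y) - 1<..(x - y) - 1 + 1}"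
      by (rule FF_neg_interval) (use xy y1 x1 in auto)
    then show ?thesis by (simp add: Bs_def)
  qed
  have "ennreal (c * (1 / (2 * y^2))) = ennreal c * ennreal (1 / (2 * y^2))"
    using c0 by (rule ennreal_mult) simp
  also have "\<dots> \<le> ennreal c * ennreal (measure FF Bs)"
    using mB by (intro mult_left_mono ennreal_leI) auto
  also have "\<dots> = ennreal c * emeasure FF Bs" by (simp add: FF.emeasure_eq_measure)
  also have "\<dots> = (\<integral>\<^sup>+v. ennreal c * indicator Bs v \<partial>FF)"
    by (rule nn_integral_cmult_indicator[symmetric]) (simp add: Bs_def)
  also have "\<dots> \<le> (\<integral>\<^sup>+v. ennreal (measure FF {x-v<..x-v+1}) \<partial>FF)"
  proof (intro nn_integral_mono)
    fix v
    show "ennreal c * indicator Bs v \<le> ennreal (measure FF {x-v<..x-v+1})"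
    proof (cases "v \<in> Bs")
      case True
      then have v: "y \<le> x - v" "x - v < y + 1" by (auto simp: Bs_def)
      have K3: "1 \<le> (3::real)" by simp
      have "c \<le> loc FF 1 (x - v)" unfolding c_def
        by (rule locFF_bounds(1)[OF y1 K3]) (use v y1 in auto)
      then show ?thesis using True by (simp add: loc_def ennreal_leI)
    qed simp
  qed
  also have "\<dots> = (\<integral>\<^sup>+v. \<integral>\<^sup>+w. indicator {x<..x+1} (v + w) \<partial>FF \<partial>FF)"
    by (intro nn_integral_cong) (rule inner_ind2[OF prob_FF sets_FF, symmetric])
  also have "\<dots> = emeasure (FF \<star> FF) {x<..x+1}"
    by (intro convolution_emeasure'[symmetric]) (auto simp: FF.finite_measure_axioms)
  also have "\<dots> = ennreal (loc (FF \<star> FF) 1 x)"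
    by (simp add: loc_def finite_measure.emeasure_eq_measure[OF finc])
  finally show ?thesis unfolding c_def by (simp add: ennreal_le_iff2) (smt (verit) measure_nonneg loc_def)
qed

lemma key_ineq:
  fixes T :: real assumes T: "16 \<le> T"
  shows "8 * exp (- 13 * T + 22 * ln 2) \<le> exp (- 8 * T - 22 * ln 3)"
proof -
  have l8: "ln (8::real) \<le> 7" using ln_le_minus_one[of 8] by simp
  have l2: "ln (2::real) \<le> 1" using ln_le_minus_one[of 2] by simp
  have l3: "ln (3::real) \<le> 2" using ln_le_minus_one[of 3] by simp
  have "8 * exp (- 13 * T + 22 * ln 2) = exp (ln 8 + (- 13 * T + 22 * ln 2))"
    by (simp add: exp_add)
  also have "\<dots> \<le> exp (- 8 * T - 22 * ln 3)"
    using l8 l2 l3 T by simp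
  finally show ?thesis .
qed

lemma not_equiv_FF: "\<not> (loc (FF \<star> FF) 1 \<sim>[at_top] (\<lambda>x. 2 * loc FF 1 x))"
proof
  assume "loc (FF \<star> FF) 1 \<sim>[at_top] (\<lambda>x. 2 * loc FF 1 x)"
  from asymp_equivD[OF this] have
    "\<forall>\<^sub>F x in at_top. (if loc (FF \<star> FF) 1 x = 0 \<and> 2 * loc FF 1 x = 0 then 1 else loc (FF \<star> FF) 1 x / (2 * loc FF 1 x)) < 2"
    by (rule order_tendstoD) simp
  then obtain N where N: "\<And>x. x \<ge> N \<Longrightarrow> (if loc (FF \<star> FF) 1 x = 0 \<and> 2 * loc FF 1 x = 0 then 1 else loc (FF \<star> FF) 1 x / (2 * loc FF 1 x)) < 2"
    by (auto simp: eventually_at_top_linorder)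
  obtain k :: nat where k: "max N 16 < 2 ^ k"
    using real_arch_pow[of 2 "max N 16"] by auto
  define T :: real where "T = 2 ^ k"
  have T: "T > max N 16" using k by (simp add: T_def)
  define x where "x = exp (3 * 2 ^ k / 2 :: real)"
  define y where "y = exp (2 ^ Suc k :: real)"
  have x1: "1 \<le> x" by (simp add: x_def)
  have y1: "1 \<le> y" by (simp add: y_def)
  have "N \<le> T" using T by simp
  also have "T \<le> 3 * T / 2" using T by simp
  also have "\<dots> \<le> x" using exp_ge_2T[of "3 * T / 2"] T by (simp add: x_def T_def)
  finally have Nx: "N \<le> x" .
  have yx: "y = x * exp (T / 2)" by (simp add: x_def y_def T_def flip: exp_add)
  have "2 \<le> exp (T / 2)" using exp_ge_add_one_self[of "T/2"] T by linarith
  then have "x * 2 \<le> y" unfolding yx using x1 by (intro mult_left_mono) auto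
  then have xy: "x + 1 \<le> y" using x1 by linarith
  have y2: "y^2 = exp (4 * T)" by (simp add: y_def T_def power2_eq_square flip: exp_add)
  have Z: "0 < Zr" using Z_props by simp
  have K2: "1 \<le> (2::real)" by simp
  have lxu: "loc FF 1 x \<le> gg x * exp (22 * ln 2) / (2 * Zr)"
    by (rule locFF_bounds(2)[OF x1 K2]) (use x1 in auto)
  have lxl: "gg x * exp (- 22 * ln 2) / (2 * Zr) \<le> loc FF 1 x"
    by (rule locFF_bounds(1)[OF x1 K2]) (use x1 in auto)
  have lxpos: "0 < loc FF 1 x" using lxl gg_pos[OF x1] Z by (smt (verit) divide_pos_pos exp_gt_zero mult_pos_pos)
  have ggy: "gg y = exp (- 4 * T)" using gg_at_P[of "Suc k"] by (simp add: y_def T_def)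
  have ggx: "gg x \<le> exp (- 13 * T)" using gg_at_mid[of k] by (simp add: x_def T_def)
  have conv: "exp (- 4 * T) * exp (- 22 * ln 3) / (2 * Zr) * (1 / (2 * exp (4 * T))) \<le> loc (FF \<star> FF) 1 x"
    using conv_FF_lower[OF x1 y1 xy] ggy y2 by simp
  have "4 * loc FF 1 x \<le> 4 * (exp (- 13 * T) * exp (22 * ln 2) / (2 * Zr))"
  proof -
    have "gg x * exp (22 * ln 2) / (2 * Zr) \<le> exp (- 13 * T) * exp (22 * ln 2) / (2 * Zr)"
      by (intro divide_right_mono mult_right_mono) (use ggx Z in auto)
    then show ?thesis using lxu by linarith
  qed
  also have "\<dots> = (8 * exp (- 13 * T + 22 * ln 2)) / (4 * Zr)"
    using Z by (simp add: field_simps mult_exp_exp)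
  also have "\<dots> \<le> exp (- 8 * T - 22 * ln 3) / (4 * Zr)"
    using key_ineq[of T] T Z by (intro divide_right_mono) auto
  also have "\<dots> = exp (- 4 * T) * exp (- 22 * ln 3) / (2 * Zr) * (1 / (2 * exp (4 * T)))"
    using Z by (simp add: field_simps mult_exp_exp flip: exp_add)
  also have "\<dots> \<le> loc (FF \<star> FF) 1 x" by (rule conv)
  finally have big: "4 * loc FF 1 x \<le> loc (FF \<star> FF) 1 x" .
  have "2 \<le> loc (FF \<star> FF) 1 x / (2 * loc FF 1 x)"
    using big lxpos by (simp add: field_simps)
  moreover have "2 * loc FF 1 x \<noteq> 0" using lxpos by simp
  ultimately show False using N[OF Nx] by simp
qed

lemma main_FF:
  "is_real_distr FF \<and> 0 < q1 FF \<and> q1 FF < 1 \<and> heavy_tailed_F2 FF \<and>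
     \<not> locally_almost_decreasing (F1 FF) \<and> S_loc (F1 FF) \<and>
     (\<exists>d>0. \<not> ((loc (FF \<star> FF) d) \<sim>[at_top] (\<lambda>x. 2 * loc FF d x)))"
  using prob_FF q1_FF heavy_FF not_lad_G1 S_loc_G1 not_equiv_FF
  by (auto simp: is_real_distr_def F1_FF intro!: exI[of _ 1])

theorem proposition3p1:
  shows "\<exists>F. is_real_distr F \<and> 0 < q1 F \<and> q1 F < 1 \<and>
     heavy_tailed_F2 F \<and>
     \<not> locally_almost_decreasing (F1 F) \<and>
     S_loc (F1 F) \<and>
     (\<exists>d>0. \<not> ((loc (F \<star> F) d) \<sim>[at_top] (\<lambda>x. 2 * loc F d x)))"
  using main_FF by blast

end
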